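(* Let $(a_n)_{n\ge0}$ be a bounded sequence of nonzero complex numbers such that the weighted shift $Te_n=a_ne_{n+1}$ is quasinilpotent. Let $S\in\mathcal A_T$ be nonzero and $k\ge1$ with $\hat S(j)=0$ for $j<k$ and $\hat S(k)\ne0$. If $S=T^kQ$ for some $Q\in\tilde{\mathcal A}_T$, then $\langle S\rangle=\langle T^k\rangle$. In particular, if $S=\sum_{j=k}^n\hat S(j)T^j$ is a polynomial in $T$ with $\hat S(k)\neq 0$, then $\langle S\rangle=\langle T^k\rangle$.
   Context: $H$ is a complex Hilbert space with orthonormal basis $\{e_n\}_{n\ge0}$, $Te_n=a_ne_{n+1}$, $\mathcal A_T$ is the operator-norm closure of the polynomials $p(T)$ with $p(0)=0$, and $\tilde{\mathcal A}_T=\mathcal A_T+\mathbb CI$ its unitization in $\mathcal B(H)$. For $R\in\mathcal A_T$, $\langle R\rangle$ is the smallest closed ideal of $\mathcal A_T$ containing $R$. For $\lambda$ in the unit circle $\mathbb T$ let $W_\lambda e_n=\lambda^ne_n$ and $\gamma_\lambda(S)=W_\lambda SW_\lambda^*$ (a norm-continuous action of $\mathbb T$ on $\mathcal A_T$ by isometric automorphisms with $\gamma_\lambda(T)=\lambda T$). For $S\in\mathcal A_T$, $j\ge1$, $\hat S(j)\in\mathbb C$ is defined by $\int_{\mathbb T}\gamma_\lambda(S)\lambda^{-j}\,dm(\lambda)=\hat S(j)T^j$ ($dm$ normalized Haar measure). *)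

theory Defs
  imports "HOL-Analysis.Analysis"
begin

text \<open>We identify H with l2(N) via the orthonormal basis e_n, and a bounded
operator with its matrix  M i j = <M e_j, e_i>.\<close>

type_synonym mat = "nat \<Rightarrow> nat \<Rightarrow> complex"

definition fin_supp :: "(nat \<Rightarrow> complex) \<Rightarrow> bool" where
  "fin_supp x \<longleftrightarrow> finite {j. x j \<noteq> 0}"

definition mvec :: "mat \<Rightarrow> (nat \<Rightarrow> complex) \<Rightarrow> nat \<Rightarrow> complex" where
  "mvec M x i = (\<Sum>j\<in>{j. x j \<noteq> 0}. M i j * x j)"

definition normsq_fs :: "(nat \<Rightarrow> complex) \<Rightarrow> real" where
  "normsq_fs x = (\<Sum>j\<in>{j. x j \<noteq> 0}. (cmod (x j))\<^sup>2)"

text \<open>M defines a bounded operator on l2 with norm at most C.\<close>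
definition bounded_by :: "mat \<Rightarrow> real \<Rightarrow> bool" where
  "bounded_by M C \<longleftrightarrow> C \<ge> 0 \<and> (\<forall>x. fin_supp x \<longrightarrow>
      (\<forall>N. (\<Sum>i<N. (cmod (mvec M x i))\<^sup>2) \<le> C\<^sup>2 * normsq_fs x))"

definition bounded_mat :: "mat \<Rightarrow> bool" where
  "bounded_mat M \<longleftrightarrow> (\<exists>C. bounded_by M C)"

definition opnorm :: "mat \<Rightarrow> real" where
  "opnorm M = Inf {C. bounded_by M C}"

definition mzero :: mat where "mzero = (\<lambda>i j. 0)"
definition mid :: mat where "mid = (\<lambda>i j. if i = j then 1 else 0)"
definition madd :: "mat \<Rightarrow> mat \<Rightarrow> mat" where "madd A B = (\<lambda>i j. A i j + B i j)"
definition msub :: "mat \<Rightarrow> mat \<Rightarrow> mat" where "msub A B = (\<lambda>i j. A i j - B i j)"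
definition msmul :: "complex \<Rightarrow> mat \<Rightarrow> mat" where "msmul c A = (\<lambda>i j. c * A i j)"
definition mmul :: "mat \<Rightarrow> mat \<Rightarrow> mat" where
  "mmul A B = (\<lambda>i j. \<Sum>k. A i k * B k j)"

primrec mpow :: "mat \<Rightarrow> nat \<Rightarrow> mat" where
  "mpow M 0 = mid"
| "mpow M (Suc n) = mmul M (mpow M n)"

definition invertible_mat :: "mat \<Rightarrow> bool" where
  "invertible_mat M \<longleftrightarrow> (\<exists>B. bounded_mat B \<and> mmul M B = mid \<and> mmul B M = mid)"

definition mspectrum :: "mat \<Rightarrow> complex set" where
  "mspectrum M = {z. \<not> invertible_mat (msub M (msmul z mid))}"

definition quasinilpotent :: "mat \<Rightarrow> bool" where
  "quasinilpotent M \<longleftrightarrow> bounded_mat M \<and> mspectrum M = {0}"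

text \<open>Weighted shift T e_n = a_n e_(n+1).\<close>
definition Tm :: "(nat \<Rightarrow> complex) \<Rightarrow> mat" where
  "Tm a = (\<lambda>i j. if i = Suc j then a j else 0)"

definition polys_T :: "(nat \<Rightarrow> complex) \<Rightarrow> mat set" where
  "polys_T a = {P. \<exists>n c. P = (\<lambda>i j. \<Sum>k\<in>{1..n}. c k * mpow (Tm a) k i j)}"

definition A_T :: "(nat \<Rightarrow> complex) \<Rightarrow> mat set" where
  "A_T a = {S. bounded_mat S \<and> (\<forall>\<epsilon>>0. \<exists>P\<in>polys_T a. opnorm (msub S P) < \<epsilon>)}"

definition unitA_T :: "(nat \<Rightarrow> complex) \<Rightarrow> mat set" where
  "unitA_T a = {madd S (msmul c mid) | S c. S \<in> A_T a}"

definition closed_ideal :: "(nat \<Rightarrow> complex) \<Rightarrow> mat set \<Rightarrow> bool" where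
  "closed_ideal a J \<longleftrightarrow> J \<subseteq> A_T a \<and> mzero \<in> J
     \<and> (\<forall>X\<in>J. \<forall>Y\<in>J. madd X Y \<in> J)
     \<and> (\<forall>X\<in>J. \<forall>c. msmul c X \<in> J)
     \<and> (\<forall>X\<in>J. \<forall>B\<in>A_T a. mmul B X \<in> J \<and> mmul X B \<in> J)
     \<and> (\<forall>S. bounded_mat S \<and> (\<forall>\<epsilon>>0. \<exists>X\<in>J. opnorm (msub S X) < \<epsilon>) \<longrightarrow> S \<in> J)"

definition gen_ideal :: "(nat \<Rightarrow> complex) \<Rightarrow> mat \<Rightarrow> mat set" where
  "gen_ideal a R = \<Inter>{J. closed_ideal a J \<and> R \<in> J}"

text \<open>gamma_lambda(S) = W_lambda S W_lambda^*, with W_lambda e_n = lambda^n e_n.\<close>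
definition gamma_mat :: "complex \<Rightarrow> mat \<Rightarrow> mat" where
  "gamma_mat lam S = (\<lambda>i j. lam ^ i * S i j * cnj lam ^ j)"

text \<open>The operator integral of gamma_lambda(S) lambda^(-j) dm(lambda), computed entrywise
  (lambda = cis(2 pi t), t in [0,1], dm normalized Haar measure).\<close>
definition fourier_mat :: "mat \<Rightarrow> nat \<Rightarrow> mat" where
  "fourier_mat S j = (\<lambda>p q. integral {0..1::real}
      (\<lambda>t. gamma_mat (cis (2 * pi * t)) S p q * inverse (cis (2 * pi * t) ^ j)))"

definition hat :: "(nat \<Rightarrow> complex) \<Rightarrow> mat \<Rightarrow> nat \<Rightarrow> complex" where
  "hat a S j = (THE c. fourier_mat S j = msmul c (mpow (Tm a) j))"

end

theory Submission
  imports Defs "HOL-Computational_Algebra.Formal_Power_Series"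
begin


definition W :: "(nat \<Rightarrow> complex) \<Rightarrow> nat \<Rightarrow> nat \<Rightarrow> complex" where
  "W a j m = (\<Prod>l\<in>{j..<j+m}. a l)"

definition Phi :: "(nat \<Rightarrow> complex) \<Rightarrow> complex fps \<Rightarrow> mat" where
  "Phi a f = (\<lambda>i j. if j \<le> i then fps_nth f (i-j) * W a j (i-j) else 0)"

lemma W_0[simp]: "W a j 0 = 1" by (simp add: W_def)
lemma W_1[simp]: "W a j 1 = a j" by (simp add: W_def)
lemma W_Suc0[simp]: "W a j (Suc 0) = a j" by (simp add: W_def)
lemma W_add: "W a j (m + n) = W a j m * W a (j+m) n"
  unfolding W_def by (subst prod.atLeastLessThan_concat[symmetric, of j "j+m"]) (auto simp: add.assoc)

lemma W_nz: "\<forall>n. a n \<noteq> 0 \<Longrightarrow> W a j m \<noteq> 0"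
  by (simp add: W_def)

lemma mmul_LT:
  assumes "\<And>k. k > i \<Longrightarrow> A i k = 0"
  shows "mmul A B i j = (\<Sum>k\<le>i. A i k * B k j)"
  unfolding mmul_def by (rule suminf_finite) (auto simp: assms)

lemma Phi_LT: "k > i \<Longrightarrow> Phi a f i k = 0" by (simp add: Phi_def)

lemma mmul_Phi: "mmul (Phi a f) (Phi a g) = Phi a (f * g)"
proof (intro ext)
  fix i j
  show "mmul (Phi a f) (Phi a g) i j = Phi a (f * g) i j"
  proof (cases "j \<le> i")
    case False
    then show ?thesis by (subst mmul_LT) (auto simp: Phi_def intro!: sum.neutral)
  next
    case True
    have "mmul (Phi a f) (Phi a g) i j = (\<Sum>k\<le>i. Phi a f i k * Phi a g k j)"
      by (rule mmul_LT) (simp add: Phi_def)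
    also have "\<dots> = (\<Sum>k\<in>{j..i}. Phi a f i k * Phi a g k j)"
      by (rule sum.mono_neutral_right) (auto simp: Phi_def)
    also have "\<dots> = (\<Sum>k\<in>{j..i}. fps_nth f (i-k) * fps_nth g (k-j) * W a j (i-j))"
    proof (rule sum.cong[OF refl])
      fix k assume k: "k \<in> {j..i}"
      have "W a j (i-j) = W a j (k-j) * W a k (i-k)"
        using k W_add[of a j "k-j" "i-k"] by auto
      then show "Phi a f i k * Phi a g k j = fps_nth f (i-k) * fps_nth g (k-j) * W a j (i-j)"
        using k by (simp add: Phi_def)
    qed
    also have "\<dots> = (\<Sum>l\<in>{0..i-j}. fps_nth f (i-j-l) * fps_nth g l) * W a j (i-j)"
    proof -
      have "(\<Sum>k\<in>{j..i}. fps_nth f (i-k) * fps_nth g (k-j)) = (\<Sum>l\<in>{0..i-j}. fps_nth f (i-j-l) * fps_nth g l)"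
        using True by (intro sum.reindex_bij_witness[of _ "\<lambda>l. l + j" "\<lambda>k. k - j"]) auto
      moreover have "(\<Sum>k\<in>{j..i}. fps_nth f (i-k) * fps_nth g (k-j) * W a j (i-j)) = (\<Sum>k\<in>{j..i}. fps_nth f (i-k) * fps_nth g (k-j)) * W a j (i-j)"
        by (simp add: sum_distrib_right)
      ultimately show ?thesis by simp
    qed
    also have "\<dots> = Phi a (f*g) i j"
    proof -
      have "fps_nth (f*g) (i-j) = (\<Sum>l\<in>{0..i-j}. fps_nth f (i-j-l) * fps_nth g l)"
      proof -
        have "fps_nth (f*g) (i-j) = fps_nth (g*f) (i-j)" by (simp add: mult.commute)
        also have "\<dots> = (\<Sum>l\<in>{0..i-j}. fps_nth g l * fps_nth f (i-j-l))" by (rule fps_mult_nth)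
        finally show ?thesis by (simp add: mult.commute)
      qed
      then show ?thesis using True by (simp add: Phi_def)
    qed
    finally show ?thesis .
  qed
qed

lemma Phi_add: "madd (Phi a f) (Phi a g) = Phi a (f + g)"
  by (auto simp: madd_def Phi_def fun_eq_iff algebra_simps)
lemma Phi_diff: "msub (Phi a f) (Phi a g) = Phi a (f - g)"
  by (auto simp: msub_def Phi_def fun_eq_iff algebra_simps)
lemma Phi_smul: "msmul c (Phi a f) = Phi a (fps_const c * f)"
  by (auto simp: msmul_def Phi_def fun_eq_iff algebra_simps)
lemma Phi_0: "Phi a 0 = mzero" by (auto simp: mzero_def Phi_def fun_eq_iff)
lemma Phi_1: "Phi a 1 = mid" by (auto simp: mid_def Phi_def fun_eq_iff)
lemma Phi_X: "Phi a fps_X = Tm a"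
  by (auto simp: Tm_def Phi_def fun_eq_iff fps_X_def)
lemma mpow_Phi: "mpow (Tm a) n = Phi a (fps_X ^ n)"
  by (induction n) (simp_all add: Phi_1 Phi_X[symmetric] mmul_Phi)
lemma Phi_sum: "finite A \<Longrightarrow> (\<lambda>i j. \<Sum>k\<in>A. Phi a (f k) i j) = Phi a (\<Sum>k\<in>A. f k)"
  by (auto simp: Phi_def fun_eq_iff fps_sum_nth sum_distrib_right)



lemma normsq_nonneg: "normsq_fs x \<ge> 0"
  by (simp add: normsq_fs_def sum_nonneg)

lemma normsq_ge: assumes "fin_supp x" "finite A"
  shows "(\<Sum>j\<in>A. (cmod (x j))\<^sup>2) \<le> normsq_fs x"
proof -
  have "(\<Sum>j\<in>A. (cmod (x j))\<^sup>2) = (\<Sum>j\<in>A \<inter> {j. x j \<noteq> 0}. (cmod (x j))\<^sup>2)"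
    using assms by (intro sum.mono_neutral_right) auto
  also have "\<dots> \<le> normsq_fs x" unfolding normsq_fs_def
    using assms by (intro sum_mono2) (auto simp: fin_supp_def)
  finally show ?thesis .
qed

lemma normsq_eq: assumes "{j. x j \<noteq> 0} \<subseteq> A" "finite A"
  shows "normsq_fs x = (\<Sum>j\<in>A. (cmod (x j))\<^sup>2)"
  unfolding normsq_fs_def using assms by (intro sum.mono_neutral_left) auto

lemma mvec_eq: assumes "{j. x j \<noteq> 0} \<subseteq> A" "finite A"
  shows "mvec M x i = (\<Sum>j\<in>A. M i j * x j)"
  unfolding mvec_def using assms by (intro sum.mono_neutral_left) auto

lemma bb_entry: assumes "bounded_by M C" shows "cmod (M i j) \<le> C"
proof -
  define x where "x = (\<lambda>n. if n = j then (1::complex) else 0)"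
  have fx: "fin_supp x" by (simp add: fin_supp_def x_def)
  have mv: "mvec M x i = M i j" by (subst mvec_eq[of _ "{j}"]) (auto simp: x_def)
  have ns: "normsq_fs x = 1" by (subst normsq_eq[of _ "{j}"]) (auto simp: x_def)
  have "(\<Sum>i'<Suc i. (cmod (mvec M x i'))\<^sup>2) \<le> C\<^sup>2 * normsq_fs x"
    using assms fx unfolding bounded_by_def by blast
  moreover have "(cmod (mvec M x i))\<^sup>2 \<le> (\<Sum>i'<Suc i. (cmod (mvec M x i'))\<^sup>2)"
    by (rule member_le_sum) auto
  ultimately have "(cmod (M i j))\<^sup>2 \<le> C\<^sup>2" using mv ns by simp
  moreover have "C \<ge> 0" using assms by (simp add: bounded_by_def)
  ultimately show ?thesis using power2_le_imp_le by blast
qed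

lemma bb_mono: "bounded_by M C \<Longrightarrow> C \<le> D \<Longrightarrow> bounded_by M D"
proof -
  assume a: "bounded_by M C" "C \<le> D"
  { fix x N assume "fin_supp x"
    then have "(\<Sum>i<N. (cmod (mvec M x i))\<^sup>2) \<le> C\<^sup>2 * normsq_fs x" using a by (simp add: bounded_by_def)
    also have "\<dots> \<le> D\<^sup>2 * normsq_fs x" using a normsq_nonneg[of x]
      by (intro mult_right_mono power_mono) (auto simp: bounded_by_def)
    finally have "(\<Sum>i<N. (cmod (mvec M x i))\<^sup>2) \<le> D\<^sup>2 * normsq_fs x" . }
  then show ?thesis using a by (auto simp: bounded_by_def)
qed

lemma opnorm_le: "bounded_by M C \<Longrightarrow> opnorm M \<le> C"
  unfolding opnorm_def by (rule cInf_lower) (auto simp: bounded_by_def bdd_below_def)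

lemma opnorm_nonneg: "bounded_mat M \<Longrightarrow> opnorm M \<ge> 0"
  unfolding opnorm_def bounded_mat_def by (rule cInf_greatest) (auto simp: bounded_by_def)

lemma bb_opnorm: assumes "bounded_mat M" shows "bounded_by M (opnorm M)"
proof -
  have nn: "opnorm M \<ge> 0" using opnorm_nonneg[OF assms] .
  have ne: "{C. bounded_by M C} \<noteq> {}" using assms by (auto simp: bounded_mat_def)
  { fix x N assume fx: "fin_supp x"
    let ?s = "(\<Sum>i<N. (cmod (mvec M x i))\<^sup>2)" and ?n = "normsq_fs x"
    have "?s \<le> (opnorm M)\<^sup>2 * ?n"
    proof (cases "?n = 0")
      case True
      obtain C where "bounded_by M C" using assms by (auto simp: bounded_mat_def)
      then show ?thesis using fx True unfolding bounded_by_def by auto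
    next
      case False
      then have np: "?n > 0" using normsq_nonneg[of x] by simp
      have "sqrt (?s / ?n) \<le> opnorm M" unfolding opnorm_def
      proof (rule cInf_greatest[OF ne])
        fix C assume "C \<in> {C. bounded_by M C}"
        then have "?s \<le> C\<^sup>2 * ?n" "C \<ge> 0" using fx by (auto simp: bounded_by_def)
        then have "?s / ?n \<le> C\<^sup>2" using np by (simp add: divide_le_eq)
        then show "sqrt (?s / ?n) \<le> C" using \<open>C \<ge> 0\<close> by (intro real_le_lsqrt) auto
      qed
      then have "(sqrt (?s / ?n))\<^sup>2 \<le> (opnorm M)\<^sup>2" using np by (intro power_mono) (auto simp: sum_nonneg)
      moreover have "?s / ?n \<ge> 0" using np by (simp add: sum_nonneg)
      ultimately have "?s / ?n \<le> (opnorm M)\<^sup>2" by simp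
      then show ?thesis using np by (simp add: divide_le_eq)
    qed }
  then show ?thesis using nn by (simp add: bounded_by_def)
qed

lemma opnorm_entry: "bounded_mat M \<Longrightarrow> cmod (M i j) \<le> opnorm M"
  using bb_entry bb_opnorm by blast

lemma mvec_madd: "mvec (madd A B) x i = mvec A x i + mvec B x i"
  by (simp add: mvec_def madd_def algebra_simps sum.distrib)
lemma mvec_msmul: "mvec (msmul c A) x i = c * mvec A x i"
  by (simp add: mvec_def msmul_def algebra_simps sum_distrib_left)

lemma sumsq_L2: "(\<Sum>i\<in>A. (f i)\<^sup>2) = (L2_set f A)\<^sup>2"
  by (simp add: L2_set_def sum_nonneg)

lemma bb_add: assumes "bounded_by A Ca" "bounded_by B Cb"
  shows "bounded_by (madd A B) (Ca + Cb)"
proof -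
  have c: "Ca \<ge> 0" "Cb \<ge> 0" using assms by (auto simp: bounded_by_def)
  { fix x N assume fx: "fin_supp x"
    let ?n = "normsq_fs x"
    have ha: "(L2_set (\<lambda>i. cmod (mvec A x i)) {..<N})\<^sup>2 \<le> (Ca * sqrt ?n)\<^sup>2"
      using assms(1) fx by (simp add: bounded_by_def sumsq_L2[symmetric] power_mult_distrib normsq_nonneg)
    have hb: "(L2_set (\<lambda>i. cmod (mvec B x i)) {..<N})\<^sup>2 \<le> (Cb * sqrt ?n)\<^sup>2"
      using assms(2) fx by (simp add: bounded_by_def sumsq_L2[symmetric] power_mult_distrib normsq_nonneg)
    have la: "L2_set (\<lambda>i. cmod (mvec A x i)) {..<N} \<le> Ca * sqrt ?n"
      using ha c power2_le_imp_le normsq_nonneg by (metis mult_nonneg_nonneg real_sqrt_ge_zero)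
    have lb: "L2_set (\<lambda>i. cmod (mvec B x i)) {..<N} \<le> Cb * sqrt ?n"
      using hb c power2_le_imp_le normsq_nonneg by (metis mult_nonneg_nonneg real_sqrt_ge_zero)
    have "L2_set (\<lambda>i. cmod (mvec (madd A B) x i)) {..<N}
          \<le> L2_set (\<lambda>i. cmod (mvec A x i) + cmod (mvec B x i)) {..<N}"
      by (rule L2_set_mono) (auto simp: mvec_madd norm_triangle_ineq)
    also have "\<dots> \<le> L2_set (\<lambda>i. cmod (mvec A x i)) {..<N} + L2_set (\<lambda>i. cmod (mvec B x i)) {..<N}"
      by (rule L2_set_triangle_ineq)
    also have "\<dots> \<le> (Ca + Cb) * sqrt ?n" using la lb by (simp add: algebra_simps)
    finally have "(L2_set (\<lambda>i. cmod (mvec (madd A B) x i)) {..<N})\<^sup>2 \<le> ((Ca + Cb) * sqrt ?n)\<^sup>2"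
      by (intro power_mono) (auto simp: L2_set_nonneg)
    then have "(\<Sum>i<N. (cmod (mvec (madd A B) x i))\<^sup>2) \<le> (Ca + Cb)\<^sup>2 * ?n"
      by (simp add: sumsq_L2 power_mult_distrib normsq_nonneg) }
  then show ?thesis using c by (simp add: bounded_by_def)
qed

lemma bb_smul: assumes "bounded_by A Ca" shows "bounded_by (msmul c A) (cmod c * Ca)"
proof -
  { fix x N assume fx: "fin_supp x"
    have "(\<Sum>i<N. (cmod (mvec (msmul c A) x i))\<^sup>2) = (cmod c)\<^sup>2 * (\<Sum>i<N. (cmod (mvec A x i))\<^sup>2)"
      by (simp add: mvec_msmul norm_mult power_mult_distrib sum_distrib_left)
    also have "\<dots> \<le> (cmod c)\<^sup>2 * (Ca\<^sup>2 * normsq_fs x)"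
      using assms fx by (intro mult_left_mono) (auto simp: bounded_by_def)
    finally have "(\<Sum>i<N. (cmod (mvec (msmul c A) x i))\<^sup>2) \<le> (cmod c * Ca)\<^sup>2 * normsq_fs x"
      by (simp add: power_mult_distrib) }
  then show ?thesis using assms by (simp add: bounded_by_def)
qed

definition LT :: "mat \<Rightarrow> bool" where "LT M \<longleftrightarrow> (\<forall>i k. i < k \<longrightarrow> M i k = 0)"

lemma LT_Phi: "LT (Phi a f)" by (simp add: LT_def Phi_def)

lemma bb_mult: assumes "bounded_by A Ca" "bounded_by B Cb" "LT A"
  shows "bounded_by (mmul A B) (Ca * Cb)"
proof -
  have c: "Ca \<ge> 0" "Cb \<ge> 0" using assms by (auto simp: bounded_by_def)
  { fix x N assume fx: "fin_supp x"
    define S where "S = {j. x j \<noteq> 0}"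
    have fS: "finite S" using fx by (simp add: fin_supp_def S_def)
    define y where "y = (\<lambda>k. if k < N then mvec B x k else 0)"
    have fy: "fin_supp y" unfolding fin_supp_def y_def
      by (rule finite_subset[of _ "{..<N}"]) auto
    have key: "mvec (mmul A B) x i = mvec A y i" if "i < N" for i
    proof -
      have "mvec (mmul A B) x i = (\<Sum>j\<in>S. (\<Sum>k\<le>i. A i k * B k j) * x j)"
        unfolding mvec_def S_def[symmetric]
        by (intro sum.cong refl, subst mmul_LT) (use assms(3) in \<open>auto simp: LT_def\<close>)
      also have "\<dots> = (\<Sum>j\<in>S. \<Sum>k\<le>i. A i k * B k j * x j)" by (simp add: sum_distrib_right)
      also have "\<dots> = (\<Sum>k\<le>i. \<Sum>j\<in>S. A i k * B k j * x j)" by (rule sum.swap)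
      also have "\<dots> = (\<Sum>k\<le>i. A i k * (\<Sum>j\<in>S. B k j * x j))" by (simp add: sum_distrib_left mult.assoc)
      also have "\<dots> = (\<Sum>k<N. A i k * y k)"
      proof -
        have "(\<Sum>k\<le>i. A i k * (\<Sum>j\<in>S. B k j * x j)) = (\<Sum>k<N. A i k * (\<Sum>j\<in>S. B k j * x j))"
          using that assms(3) by (intro sum.mono_neutral_left) (auto simp: LT_def)
        then show ?thesis by (simp add: y_def mvec_def S_def)
      qed
      also have "\<dots> = mvec A y i"
        by (rule mvec_eq[symmetric]) (auto simp: y_def)
      finally show ?thesis .
    qed
    have "(\<Sum>i<N. (cmod (mvec (mmul A B) x i))\<^sup>2) = (\<Sum>i<N. (cmod (mvec A y i))\<^sup>2)"
      using key by simp
    also have "\<dots> \<le> Ca\<^sup>2 * normsq_fs y" using assms(1) fy by (simp add: bounded_by_def)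
    also have "normsq_fs y = (\<Sum>k<N. (cmod (mvec B x k))\<^sup>2)"
      by (subst normsq_eq[of _ "{..<N}"]) (auto simp: y_def)
    also have "Ca\<^sup>2 * \<dots> \<le> Ca\<^sup>2 * (Cb\<^sup>2 * normsq_fs x)"
      using assms(2) fx by (intro mult_left_mono) (auto simp: bounded_by_def)
    finally have "(\<Sum>i<N. (cmod (mvec (mmul A B) x i))\<^sup>2) \<le> (Ca * Cb)\<^sup>2 * normsq_fs x"
      by (simp add: power_mult_distrib) }
  then show ?thesis using c by (simp add: bounded_by_def)
qed



lemma bm_add: "bounded_mat A \<Longrightarrow> bounded_mat B \<Longrightarrow> bounded_mat (madd A B) \<and> opnorm (madd A B) \<le> opnorm A + opnorm B"
  using bb_add[OF bb_opnorm bb_opnorm] opnorm_le bounded_mat_def by blast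
lemma bm_smul: "bounded_mat A \<Longrightarrow> bounded_mat (msmul c A) \<and> opnorm (msmul c A) \<le> cmod c * opnorm A"
  using bb_smul[OF bb_opnorm] opnorm_le bounded_mat_def by blast
lemma bm_mult: "bounded_mat A \<Longrightarrow> bounded_mat B \<Longrightarrow> LT A \<Longrightarrow> bounded_mat (mmul A B) \<and> opnorm (mmul A B) \<le> opnorm A * opnorm B"
  using bb_mult[OF bb_opnorm bb_opnorm] opnorm_le bounded_mat_def by blast

lemma msub_eq: "msub A B = madd A (msmul (-1) B)"
  by (simp add: msub_def madd_def msmul_def fun_eq_iff)

lemma bm_sub: "bounded_mat A \<Longrightarrow> bounded_mat B \<Longrightarrow> bounded_mat (msub A B) \<and> opnorm (msub A B) \<le> opnorm A + opnorm B"
  using bm_add[of A "msmul (-1) B"] bm_smul[of B "-1"] unfolding msub_eq by auto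

definition bP :: "(nat \<Rightarrow> complex) \<Rightarrow> complex fps \<Rightarrow> bool" where "bP a f \<longleftrightarrow> bounded_mat (Phi a f)"
definition nP :: "(nat \<Rightarrow> complex) \<Rightarrow> complex fps \<Rightarrow> real" where "nP a f = opnorm (Phi a f)"

lemma nP_nonneg: "bP a f \<Longrightarrow> nP a f \<ge> 0" by (simp add: bP_def nP_def opnorm_nonneg)

lemma bP_add: "bP a f \<Longrightarrow> bP a g \<Longrightarrow> bP a (f + g) \<and> nP a (f + g) \<le> nP a f + nP a g"
  using bm_add[of "Phi a f" "Phi a g"] by (simp add: bP_def nP_def Phi_add)
lemma bP_diff: "bP a f \<Longrightarrow> bP a g \<Longrightarrow> bP a (f - g) \<and> nP a (f - g) \<le> nP a f + nP a g"
  using bm_sub[of "Phi a f" "Phi a g"] by (simp add: bP_def nP_def Phi_diff)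
lemma bP_smul: "bP a f \<Longrightarrow> bP a (fps_const c * f) \<and> nP a (fps_const c * f) \<le> cmod c * nP a f"
  using bm_smul[of "Phi a f" c] by (simp add: bP_def nP_def Phi_smul)
lemma bP_mult: "bP a f \<Longrightarrow> bP a g \<Longrightarrow> bP a (f * g) \<and> nP a (f * g) \<le> nP a f * nP a g"
  using bm_mult[of "Phi a f" "Phi a g"] by (simp add: bP_def nP_def mmul_Phi LT_Phi)

lemma bP_power: "bP a f \<Longrightarrow> bP a 1 \<Longrightarrow> nP a 1 \<le> 1 \<Longrightarrow> bP a (f ^ n) \<and> nP a (f ^ n) \<le> nP a f ^ n"
proof (induction n)
  case 0 then show ?case by simp
next
  case (Suc n)
  then have "bP a (f * f^n) \<and> nP a (f * f^n) \<le> nP a f * nP a (f^n)" using bP_mult by blast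
  moreover have "nP a f * nP a (f^n) \<le> nP a f * nP a f ^ n"
    using Suc nP_nonneg by (intro mult_left_mono) auto
  ultimately show ?case by auto
qed

lemma sum_shift_le: "(\<Sum>i<(n::nat). if m \<le> i then f (i - m) else 0) = (\<Sum>j<n - m. (f j :: real))"
proof (induction n)
  case 0 then show ?case by simp
next
  case (Suc n)
  show ?case
  proof (cases "m \<le> n")
    case True
    then have "Suc n - m = Suc (n - m)" by simp
    then show ?thesis using Suc True by simp
  next
    case False
    then have "Suc n - m = n - m" by simp
    then show ?thesis using Suc False by simp
  qed
qed

lemma bb_Xpow: assumes "\<And>j. cmod (W a j m) \<le> w" "w \<ge> 0"
  shows "bounded_by (Phi a (fps_X ^ m)) w"
proof -
  { fix x N assume fx: "fin_supp x"
    have mv: "mvec (Phi a (fps_X ^ m)) x i = (if m \<le> i then W a (i-m) m * x (i-m) else 0)" for i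
    proof -
      have "mvec (Phi a (fps_X ^ m)) x i = (\<Sum>j\<in>{j. x j \<noteq> 0}. (if i = j + m then W a j m else 0) * x j)"
        unfolding mvec_def by (intro sum.cong refl) (auto simp: Phi_def fps_X_power_nth)
      also have "\<dots> = (if m \<le> i then W a (i-m) m * x (i-m) else 0)"
      proof (cases "m \<le> i")
        case True
        have "(\<Sum>j\<in>{j. x j \<noteq> 0}. (if i = j + m then W a j m else 0) * x j)
           = (\<Sum>j\<in>{j. x j \<noteq> 0}. if j = i - m then W a (i-m) m * x (i-m) else 0)"
          using True by (intro sum.cong refl) auto
        also have "\<dots> = (if m \<le> i then W a (i-m) m * x (i-m) else 0)"
          using fx True by (auto simp: fin_supp_def)
        finally show ?thesis .
      next
        case False then show ?thesis by (auto intro!: sum.neutral)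
      qed
      finally show ?thesis .
    qed
    have "(\<Sum>i<N. (cmod (mvec (Phi a (fps_X ^ m)) x i))\<^sup>2)
          \<le> (\<Sum>i<N. if m \<le> i then w\<^sup>2 * (cmod (x (i-m)))\<^sup>2 else 0)"
    proof (rule sum_mono)
      fix i
      have "(cmod (W a (i-m) m * x (i-m)))\<^sup>2 \<le> w\<^sup>2 * (cmod (x (i-m)))\<^sup>2"
        unfolding norm_mult power_mult_distrib
        using assms by (intro mult_right_mono power_mono) auto
      then show "(cmod (mvec (Phi a (fps_X ^ m)) x i))\<^sup>2 \<le> (if m \<le> i then w\<^sup>2 * (cmod (x (i-m)))\<^sup>2 else 0)"
        by (simp add: mv)
    qed
    also have "\<dots> = (\<Sum>j<N-m. w\<^sup>2 * (cmod (x j))\<^sup>2)"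
      by (rule sum_shift_le)
    also have "\<dots> = w\<^sup>2 * (\<Sum>j<N-m. (cmod (x j))\<^sup>2)" by (simp add: sum_distrib_left)
    also have "\<dots> \<le> w\<^sup>2 * normsq_fs x"
      using normsq_ge[OF fx] by (intro mult_left_mono) auto
    finally have "(\<Sum>i<N. (cmod (mvec (Phi a (fps_X ^ m)) x i))\<^sup>2) \<le> w\<^sup>2 * normsq_fs x" . }
  then show ?thesis using assms by (simp add: bounded_by_def)
qed

lemma bP_Xpow: assumes "\<And>j. cmod (W a j m) \<le> w"
  shows "bP a (fps_X ^ m) \<and> nP a (fps_X ^ m) \<le> w"
proof -
  have "w \<ge> 0" using assms[of 0] norm_ge_zero order_trans by blast
  then show ?thesis using bb_Xpow[OF assms] opnorm_le bounded_mat_def bP_def nP_def by metis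
qed

lemma bP_1: "bP a 1 \<and> nP a 1 \<le> 1"
  using bP_Xpow[of a 0 1] by simp

lemma QN:
  assumes qn: "quasinilpotent (Tm a)" and rho: "\<rho> > 0"
  shows "\<exists>K\<ge>0. \<forall>j m. cmod (W a j m) \<le> K * \<rho> ^ m"
proof -
  define z where "z = complex_of_real \<rho>"
  have z0: "z \<noteq> 0" using rho by (simp add: z_def)
  have "z \<notin> mspectrum (Tm a)" using qn z0 by (simp add: quasinilpotent_def)
  then obtain B where bB: "bounded_mat B" and inv: "mmul (msub (Tm a) (msmul z mid)) B = mid"
    by (auto simp: mspectrum_def invertible_mat_def)
  have G: "msub (Tm a) (msmul z mid) = Phi a (fps_X - fps_const z * 1)"
    by (simp only: Phi_X[symmetric] Phi_1[of a, symmetric] Phi_smul Phi_diff)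
  have row: "(if i > 0 then a (i-1) * B (i-1) j else 0) - z * B i j = mid i j" for i j
  proof -
    have "mid i j = (\<Sum>k\<le>i. Phi a (fps_X - fps_const z * 1) i k * B k j)"
      using inv unfolding G by (subst (asm) fun_eq_iff) (metis mmul_LT Phi_LT)
    also have "\<dots> = (\<Sum>k\<in>(if i > 0 then {i-1, i} else {i}). Phi a (fps_X - fps_const z * 1) i k * B k j)"
      by (intro sum.mono_neutral_right) (auto simp: Phi_def fps_X_nth)
    also have "\<dots> = (if i > 0 then a (i-1) * B (i-1) j else 0) - z * B i j"
    proof (cases "i > 0")
      case True
      have "Suc (i - 1) = i" using True by simp
      then have "W a (i-1) 1 = a (i-1)" by simp
      then show ?thesis using True by (simp add: Phi_def fps_X_nth)
    qed (simp add: Phi_def)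
    finally show ?thesis by simp
  qed
  have Bval: "\<forall>j. (i < j \<longrightarrow> B i j = 0) \<and> (j \<le> i \<longrightarrow> B i j = - W a j (i-j) / z ^ (i-j+1))" for i
  proof (induction i)
    case 0
    show ?case
    proof (intro allI conjI impI)
      fix j
      show "0 < j \<Longrightarrow> B 0 j = 0" using row[of 0 j] z0 by (simp add: mid_def)
      show "j \<le> 0 \<Longrightarrow> B 0 j = - W a j (0 - j) / z ^ (0 - j + 1)" using row[of 0 j] z0
        by (auto simp: mid_def field_simps minus_equation_iff)
    qed
  next
    case (Suc i)
    show ?case
    proof (intro allI conjI impI)
      fix j
      have r: "a i * B i j - z * B (Suc i) j = mid (Suc i) j" using row[of "Suc i" j] by simp
      show "Suc i < j \<Longrightarrow> B (Suc i) j = 0" using r Suc[rule_format, of j] z0 by (simp add: mid_def)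
      assume j: "j \<le> Suc i"
      show "B (Suc i) j = - W a j (Suc i - j) / z ^ (Suc i - j + 1)"
      proof (cases "j = Suc i")
        case True
        then show ?thesis using r Suc[rule_format, of j] z0
          by (simp add: mid_def field_simps) (metis add.commute add_eq_0_iff)
      next
        case False
        then have ji: "j \<le> i" using j by simp
        have Bi: "B i j = - W a j (i-j) / z ^ (i-j+1)" using Suc ji by blast
        have Wi: "W a j (Suc i - j) = W a j (i-j) * a i"
          using W_add[of a j "i-j" 1] ji by (simp add: Suc_diff_le)
        have "B (Suc i) j = a i * B i j / z" using r False z0 by (simp add: mid_def field_simps)
        then show ?thesis using Bi Wi ji z0 by (simp add: Suc_diff_le field_simps)
      qed
    qed
  qed
  define K where "K = opnorm B * \<rho>"
  have "K \<ge> 0" using opnorm_nonneg[OF bB] rho by (simp add: K_def)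
  moreover have "cmod (W a j m) \<le> K * \<rho> ^ m" for j m
  proof -
    have "B (j+m) j = - W a j m / z ^ (m+1)" using Bval[of "j+m"] by simp
    then have "cmod (W a j m) / \<rho> ^ (m+1) \<le> opnorm B"
      using opnorm_entry[OF bB, of "j+m" j] rho by (simp add: z_def norm_divide norm_power norm_mult del: of_real_power)
    then show ?thesis using rho by (simp add: K_def field_simps)
  qed
  ultimately show ?thesis by blast
qed



lemma W_bound: assumes "\<forall>n. cmod (a n) \<le> Bd" shows "cmod (W a j m) \<le> Bd ^ m"
proof -
  have "cmod (W a j m) = (\<Prod>l\<in>{j..<j+m}. cmod (a l))" by (simp add: W_def prod_norm)
  also have "\<dots> \<le> (\<Prod>l\<in>{j..<j+m}. Bd)" using assms by (intro prod_mono) auto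
  also have "\<dots> = Bd ^ m" by simp
  finally show ?thesis .
qed

lemma bP_sum: "finite A \<Longrightarrow> (\<And>k. k \<in> A \<Longrightarrow> bP a (f k)) \<Longrightarrow> bP a (\<Sum>k\<in>A. f k) \<and> nP a (\<Sum>k\<in>A. f k) \<le> (\<Sum>k\<in>A. nP a (f k))"
proof (induction A rule: finite_induct)
  case empty
  have "bounded_by (Phi a 0) 0" by (simp add: Phi_0 mzero_def bounded_by_def mvec_def normsq_nonneg)
  then show ?case unfolding bP_def nP_def bounded_mat_def using opnorm_le by auto
next
  case (insert x F)
  then show ?case using bP_add[of a "f x" "sum f F"] by auto
qed

lemma Phi_poly: "(\<lambda>i j. \<Sum>k\<in>{1..n}. c k * mpow (Tm a) k i j) = Phi a (fps_X * (\<Sum>k\<in>{1..n}. fps_const (c k) * fps_X ^ (k - 1)))"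
proof -
  have "(\<lambda>i j. \<Sum>k\<in>{1..n}. c k * mpow (Tm a) k i j) = (\<lambda>i j. \<Sum>k\<in>{1..n}. Phi a (fps_const (c k) * fps_X ^ k) i j)"
    by (simp add: mpow_Phi Phi_smul[symmetric] msmul_def)
  also have "\<dots> = Phi a (\<Sum>k\<in>{1..n}. fps_const (c k) * fps_X ^ k)" by (rule Phi_sum) simp
  also have "(\<Sum>k\<in>{1..n}. fps_const (c k) * fps_X ^ k) = fps_X * (\<Sum>k\<in>{1..n}. fps_const (c k) * fps_X ^ (k - 1))"
    unfolding sum_distrib_left
  proof (intro sum.cong refl)
    fix k assume "k \<in> {1..n}"
    then have "fps_X ^ k = fps_X * (fps_X :: complex fps) ^ (k-1)" by (cases k) auto
    then show "fps_const (c k) * fps_X ^ k = fps_X * (fps_const (c k) * fps_X ^ (k - 1))" by (simp add: ac_simps)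
  qed
  finally show ?thesis .
qed

context
  fixes a :: "nat \<Rightarrow> complex" and Bd :: real
  assumes Bd: "\<forall>n. cmod (a n) \<le> Bd"
begin

lemma bP_Xpow_B: "bP a (fps_X ^ m)"
  using bP_Xpow[of a m "Bd ^ m"] W_bound[OF Bd] by blast

lemma bP_polyq: "bP a (\<Sum>k\<in>{1..n}. fps_const (c k) * fps_X ^ (k - 1))"
  by (intro bP_sum[THEN conjunct1]) (auto intro!: bP_smul[THEN conjunct1] bP_Xpow_B)

lemma polys_form: "P \<in> polys_T a \<Longrightarrow> \<exists>q. P = Phi a (fps_X * q) \<and> bP a q"
  unfolding polys_T_def using Phi_poly bP_polyq by blast

lemma bP_X: "bP a fps_X" using bP_Xpow_B[of 1] by simp

lemma polys_bounded: "P \<in> polys_T a \<Longrightarrow> bounded_mat P"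
  using polys_form bP_mult[OF bP_X] bP_def by blast

end

lemma zero_by_eps: assumes "\<And>e. e > 0 \<Longrightarrow> cmod z \<le> e * C" "C \<ge> 0" shows "z = 0"
proof (rule ccontr)
  assume "z \<noteq> 0"
  then have "cmod z > 0" by simp
  then have "cmod z \<le> (cmod z / (C + 1)) * C" using assms(1)[of "cmod z / (C+1)"] assms(2) by simp
  also have "\<dots> < cmod z" using \<open>cmod z > 0\<close> assms(2) by (simp add: field_simps)
  finally show False by simp
qed

lemma AT_form:
  assumes S: "S \<in> A_T a" and nz: "\<forall>n. a n \<noteq> 0" and Bd: "\<forall>n. cmod (a n) \<le> Bd"
  shows "\<exists>r. S = Phi a r \<and> fps_nth r 0 = 0"
proof -
  define r where "r = Abs_fps (\<lambda>m. S m 0 / W a 0 m)"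
  have approx: "\<exists>p. (\<forall>i j. cmod (S i j - Phi a p i j) < e) \<and> fps_nth p 0 = 0" if e: "e > 0" for e
  proof -
    obtain P where P: "P \<in> polys_T a" "opnorm (msub S P) < e" using S e by (auto simp: A_T_def)
    obtain q where q: "P = Phi a (fps_X * q)" using polys_form[OF Bd P(1)] by blast
    have bS: "bounded_mat S" using S by (simp add: A_T_def)
    have bm: "bounded_mat (msub S P)" using bm_sub[OF bS polys_bounded[OF Bd P(1)]] by simp
    have "cmod (S i j - P i j) < e" for i j
      using opnorm_entry[OF bm, of i j] P(2) by (simp add: msub_def)
    then show ?thesis using q by (intro exI[of _ "fps_X * q"]) auto
  qed
  have main: "S i j = Phi a r i j" for i j
  proof (cases "j \<le> i")
    case False
    have "cmod (S i j) \<le> e * 1" if e: "e > 0" for e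
    proof -
      obtain p where p: "\<forall>i j. cmod (S i j - Phi a p i j) < e" using approx[OF e] by blast
      have "cmod (S i j - Phi a p i j) < e" by (rule p[rule_format])
      then show ?thesis using False by (simp add: Phi_def)
    qed
    then have "S i j = 0" by (intro zero_by_eps[of _ 1]) auto
    then show ?thesis using False by (simp add: Phi_def)
  next
    case True
    define m where "m = i - j"
    have i: "i = j + m" using True by (simp add: m_def)
    define w0 where "w0 = W a 0 m"
    define w where "w = W a j m"
    have w0: "w0 \<noteq> 0" using W_nz[OF nz] by (simp add: w0_def)
    let ?z = "S i j - (S m 0 / w0) * w"
    have "cmod ?z \<le> e * (1 + cmod w / cmod w0)" if e: "e > 0" for e
    proof -
      obtain p where p: "\<forall>i j. cmod (S i j - Phi a p i j) < e" using approx[OF e] by blast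
      let ?c = "fps_nth p m"
      have h1: "cmod (S i j - ?c * w) < e" using p[rule_format, of i j] i by (simp add: Phi_def w_def)
      have h2: "cmod (S m 0 - ?c * w0) < e" using p[rule_format, of m 0] by (simp add: Phi_def w0_def)
      have "?z = (S i j - ?c * w) + (?c * w0 - S m 0) * (w / w0)" using w0 by (simp add: field_simps)
      then have "cmod ?z \<le> cmod (S i j - ?c * w) + cmod (?c * w0 - S m 0) * (cmod w / cmod w0)"
        by (metis norm_triangle_ineq norm_mult norm_divide)
      also have "\<dots> \<le> e + e * (cmod w / cmod w0)"
        using h1 h2 by (intro add_mono mult_right_mono) (auto simp: norm_minus_commute)
      finally show ?thesis by (simp add: algebra_simps)
    qed
    then have "?z = 0" by (intro zero_by_eps[of _ "1 + cmod w / cmod w0"]) auto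
    then show ?thesis using True by (simp add: Phi_def r_def m_def w_def w0_def)
  qed
  have "S 0 0 = 0"
  proof -
    have "cmod (S 0 0) \<le> e * 1" if e: "e > 0" for e
    proof -
      obtain p where p: "\<forall>i j. cmod (S i j - Phi a p i j) < e" "fps_nth p 0 = 0" using approx[OF e] by blast
      have "cmod (S 0 0 - Phi a p 0 0) < e" "fps_nth p 0 = 0" by (rule p(1)[rule_format], rule p(2))
      then show ?thesis by (simp add: Phi_def)
    qed
    then show ?thesis by (intro zero_by_eps[of _ 1]) auto
  qed
  then have "fps_nth r 0 = 0" by (simp add: r_def)
  moreover have "S = Phi a r" using main by (intro ext)
  ultimately show ?thesis by blast
qed



lemma integral_cis_zero:
  fixes n :: int assumes n: "n \<noteq> 0"
  shows "((\<lambda>t. cis (real_of_int n * (2 * pi * t))) has_integral 0) {0..1::real}"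
proof -
  define A where "A = \<i> * complex_of_real (2 * pi * real_of_int n)"
  have A0: "A \<noteq> 0" using n by (simp add: A_def)
  have e: "exp (t *\<^sub>R A) = cis (real_of_int n * (2 * pi * t))" for t
    by (simp add: A_def cis_conv_exp scaleR_conv_of_real algebra_simps)
  have d: "((\<lambda>t. exp (t *\<^sub>R A) * inverse A) has_vector_derivative cis (real_of_int n * (2 * pi * t))) (at t within {0..1})" for t
  proof -
    have "((\<lambda>t. exp (t *\<^sub>R A) * inverse A) has_vector_derivative exp (t *\<^sub>R A) * A * inverse A) (at t within {0..1})"
      by (intro has_vector_derivative_mult_left exp_scaleR_has_vector_derivative_right)
    then show ?thesis using A0 e by (simp add: mult.assoc)
  qed
  have "((\<lambda>t. cis (real_of_int n * (2 * pi * t))) has_integral (exp (1 *\<^sub>R A) * inverse A - exp (0 *\<^sub>R A) * inverse A)) {0..1::real}"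
    by (rule fundamental_theorem_of_calculus) (auto intro: d)
  moreover have "exp (1 *\<^sub>R A) = 1" using e[of 1] cis_multiple_2pi[of "real_of_int n"]
    by (simp add: mult.commute mult.left_commute)
  ultimately show ?thesis by simp
qed

lemma gamma_cis: "gamma_mat (cis \<theta>) S p q * inverse (cis \<theta> ^ k) = S p q * cis ((real p - real q - real k) * \<theta>)"
proof -
  have "gamma_mat (cis \<theta>) S p q * inverse (cis \<theta> ^ k) = S p q * (cis (real p * \<theta>) * cis (real q * (- \<theta>)) * cis (- (real k * \<theta>)))"
    by (simp add: gamma_mat_def Complex.DeMoivre cis_cnj cis_inverse ac_simps)
  also have "\<dots> = S p q * cis ((real p - real q - real k) * \<theta>)"
    by (simp add: cis_mult algebra_simps)
  finally show ?thesis .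
qed

lemma fourier_zero:
  assumes "\<And>p q. p = q + k \<Longrightarrow> S p q = 0"
  shows "fourier_mat S k = mzero"
proof (intro ext)
  fix p q
  show "fourier_mat S k p q = mzero p q"
  proof (cases "S p q = 0")
    case True then show ?thesis by (simp add: fourier_mat_def gamma_mat_def mzero_def)
  next
    case False
    define n where "n = int p - int q - int k"
    have n0: "n \<noteq> 0"
    proof
      assume "n = 0"
      then have "p = q + k" unfolding n_def by presburger
      then show False using False assms by blast
    qed
    have rn: "real p - real q - real k = real_of_int n" by (simp add: n_def)
    have "((\<lambda>t. S p q * cis (real_of_int n * (2 * pi * t))) has_integral S p q * 0) {0..1::real}"
      by (intro has_integral_mult_right integral_cis_zero n0)
    then have "((\<lambda>t. gamma_mat (cis (2 * pi * t)) S p q * inverse (cis (2 * pi * t) ^ k)) has_integral 0) {0..1::real}"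
      by (simp add: gamma_cis rn)
    then show ?thesis by (simp add: fourier_mat_def mzero_def integral_unique)
  qed
qed

lemma hat_zero:
  assumes S: "S = Phi a f" and fk: "fps_nth f k = 0" and nz: "\<forall>n. a n \<noteq> 0"
  shows "hat a S k = 0"
proof -
  have F: "fourier_mat S k = msmul 0 (mpow (Tm a) k)"
  proof -
    have "fourier_mat S k = mzero" using fk by (intro fourier_zero) (simp add: S Phi_def)
    then show ?thesis by (simp add: msmul_def mzero_def fun_eq_iff)
  qed
  show ?thesis unfolding hat_def
  proof (rule the_equality)
    fix c assume "fourier_mat S k = msmul c (mpow (Tm a) k)"
    then have "msmul c (mpow (Tm a) k) k 0 = msmul 0 (mpow (Tm a) k) k 0" using F by simp
    then show "c = 0" using W_nz[OF nz, of 0 k] by (simp add: msmul_def mpow_Phi Phi_def)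
  qed (rule F)
qed



lemma fps_of_nat_mult: "(of_nat c :: complex fps) * f = fps_const (of_nat c) * f"
  by (simp add: fps_of_nat)

lemma specrad:
  assumes S: "Phi a r \<in> A_T a" and Bd: "\<forall>n. cmod (a n) \<le> Bd"
    and qn: "quasinilpotent (Tm a)" and dl: "\<delta> > 0"
  shows "\<exists>K\<ge>0. \<forall>M. bP a (r ^ M) \<and> nP a (r ^ M) \<le> K * \<delta> ^ M"
proof -
  define \<eta> where "\<eta> = \<delta> / 2"
  have eta: "\<eta> > 0" using dl by (simp add: \<eta>_def)
  obtain P where P: "P \<in> polys_T a" "opnorm (msub (Phi a r) P) < \<eta>" using S eta by (auto simp: A_T_def)
  obtain q where q: "P = Phi a (fps_X * q)" "bP a q" using polys_form[OF Bd P(1)] by blast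
  define p where "p = fps_X * q"
  define d where "d = r - p"
  have bS: "bP a r" using S by (simp add: A_T_def bP_def)
  have bp: "bP a p" unfolding p_def using bP_mult[OF bP_X[OF Bd] q(2)] by blast
  have bd: "bP a d" and nd: "nP a d < \<eta>"
    using bP_diff[OF bS bp] P(2) q(1) by (auto simp: d_def nP_def Phi_diff p_def)
  define L where "L = nP a q"
  have L0: "L \<ge> 0" using nP_nonneg[OF q(2)] by (simp add: L_def)
  define \<sigma> where "\<sigma> = \<eta> / (L + 1)"
  have sig: "\<sigma> > 0" using eta L0 by (simp add: \<sigma>_def)
  obtain K1 where K1: "K1 \<ge> 0" "\<forall>j m. cmod (W a j m) \<le> K1 * \<sigma> ^ m" using QN[OF qn sig] by blast
  have sL: "\<sigma> * L \<le> \<eta>" using eta L0 by (simp add: \<sigma>_def field_simps)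
  have pp: "bP a (p ^ i) \<and> nP a (p ^ i) \<le> K1 * \<eta> ^ i" for i
  proof -
    have x: "bP a (fps_X ^ i) \<and> nP a (fps_X ^ i) \<le> K1 * \<sigma> ^ i" using bP_Xpow K1(2) by blast
    have qi: "bP a (q ^ i) \<and> nP a (q ^ i) \<le> L ^ i" using bP_power[OF q(2)] bP_1 by (simp add: L_def)
    have "p ^ i = fps_X ^ i * q ^ i" by (simp add: p_def power_mult_distrib)
    then have "bP a (p ^ i) \<and> nP a (p ^ i) \<le> nP a (fps_X ^ i) * nP a (q ^ i)" using bP_mult x qi by metis
    moreover have "nP a (fps_X ^ i) * nP a (q ^ i) \<le> (K1 * \<sigma> ^ i) * L ^ i"
      using x qi nP_nonneg K1(1) sig by (intro mult_mono) auto
    moreover have "(K1 * \<sigma> ^ i) * L ^ i \<le> K1 * \<eta> ^ i"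
      using K1(1) sL sig L0 by (simp add: mult.assoc power_mult_distrib[symmetric] mult_left_mono power_mono)
    ultimately show ?thesis by linarith
  qed
  have dd: "bP a (d ^ i) \<and> nP a (d ^ i) \<le> \<eta> ^ i" for i
  proof -
    have "bP a (d ^ i) \<and> nP a (d ^ i) \<le> nP a d ^ i" using bP_power[OF bd] bP_1 by simp
    moreover have "nP a d ^ i \<le> \<eta> ^ i" using nd nP_nonneg[OF bd] by (intro power_mono) auto
    ultimately show ?thesis by linarith
  qed
  have "bP a (r ^ M) \<and> nP a (r ^ M) \<le> K1 * \<delta> ^ M" for M
  proof -
    define t where "t i = fps_const (of_nat (M choose i)) * (p ^ i * d ^ (M - i))" for i
    have r: "r = p + d" by (simp add: d_def)
    have rM: "r ^ M = (\<Sum>i\<le>M. t i)"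
      unfolding r binomial_ring t_def by (intro sum.cong refl) (simp add: fps_of_nat ac_simps)
    have tb: "bP a (t i) \<and> nP a (t i) \<le> of_nat (M choose i) * (K1 * \<eta> ^ M)" if "i \<le> M" for i
    proof -
      have m: "bP a (p ^ i * d ^ (M - i)) \<and> nP a (p ^ i * d ^ (M - i)) \<le> nP a (p ^ i) * nP a (d ^ (M-i))"
        using bP_mult pp dd by blast
      have "nP a (p ^ i) * nP a (d ^ (M-i)) \<le> (K1 * \<eta> ^ i) * \<eta> ^ (M - i)"
        using pp dd nP_nonneg K1(1) eta by (intro mult_mono) auto
      also have "\<dots> = K1 * \<eta> ^ M" using that by (simp add: mult.assoc power_add[symmetric])
      finally have "nP a (p ^ i * d ^ (M - i)) \<le> K1 * \<eta> ^ M" using m by linarith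
      then show ?thesis using bP_smul[of a "p ^ i * d ^ (M - i)" "of_nat (M choose i)"] m
        unfolding t_def by (smt (verit, ccfv_SIG) norm_of_nat mult_left_mono of_nat_0_le_iff)
    qed
    have "bP a (\<Sum>i\<le>M. t i) \<and> nP a (\<Sum>i\<le>M. t i) \<le> (\<Sum>i\<le>M. nP a (t i))"
      using tb by (intro bP_sum) auto
    moreover have "(\<Sum>i\<le>M. nP a (t i)) \<le> (\<Sum>i\<le>M. of_nat (M choose i) * (K1 * \<eta> ^ M))"
      using tb by (intro sum_mono) auto
    moreover have "(\<Sum>i\<le>M. of_nat (M choose i) * (K1 * \<eta> ^ M)) = K1 * \<delta> ^ M"
    proof -
      have "(\<Sum>i\<le>M. of_nat (M choose i) * (K1 * \<eta> ^ M)) = real (\<Sum>i\<le>M. M choose i) * (K1 * \<eta> ^ M)"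
        by (simp add: sum_distrib_right)
      also have "\<dots> = 2 ^ M * (K1 * \<eta> ^ M)" by (simp add: choose_row_sum)
      also have "\<dots> = K1 * \<delta> ^ M" by (simp add: \<eta>_def power_divide)
      finally show ?thesis .
    qed
    ultimately show ?thesis using rM by (metis order_trans)
  qed
  then show ?thesis using K1(1) by blast
qed



lemma ring_aux:
  fixes b g C X r R :: "'a::comm_ring_1"
  assumes "b * C = 1"
  shows "g * (X * R) - b * g * (X * (r + C) * R) = - (b * g) * (X * (r * R))"
proof -
  have e1: "b * g * (X * (r + C) * R) = b * g * (X * (r * R)) + (b * C) * (g * (X * R))" by (simp add: algebra_simps)
  show ?thesis unfolding e1 assms by (simp add: algebra_simps)
qed

lemma telescope:
  fixes c :: complex and s r X :: "complex fps"
  assumes c: "c \<noteq> 0" and s: "s = X * (r + fps_const c)"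
  shows "X - (\<Sum>m<M. fps_const (1/c * (-1/c)^m) * (s * r^m)) = fps_const ((-1/c)^M) * (X * r^M)"
proof (induction M)
  case 0 then show ?case by simp
next
  case (Suc M)
  define \<alpha> where "\<alpha> = (-1/c)^M"
  have cc: "fps_const (1/c) * fps_const c = 1" using c by (simp add: fps_const_mult)
  have "X - (\<Sum>m<Suc M. fps_const (1/c * (-1/c)^m) * (s * r^m))
      = fps_const \<alpha> * (X * r^M) - fps_const (1/c) * fps_const \<alpha> * (X * (r + fps_const c) * r^M)"
    using Suc unfolding \<alpha>_def by (simp add: s fps_const_mult[symmetric] algebra_simps)
  also have "\<dots> = - (fps_const (1/c) * fps_const \<alpha>) * (X * r ^ Suc M)"
    using ring_aux[OF cc, of "fps_const \<alpha>" X "r^M" r] by (simp only: power_Suc)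
  also have "\<dots> = fps_const ((-1/c)^Suc M) * (X * r ^ Suc M)"
  proof -
    have "fps_const ((-1/c)^Suc M) = - (fps_const (1/c) * fps_const \<alpha>)"
      by (simp add: \<alpha>_def fps_const_mult fps_const_neg)
    then show ?thesis by (simp only:)
  qed
  finally show ?case .
qed

lemma opnorm_mzero: "opnorm mzero = 0"
proof -
  have "bounded_by mzero 0" by (simp add: bounded_by_def mvec_def mzero_def normsq_nonneg)
  then show ?thesis using opnorm_le opnorm_nonneg bounded_mat_def by (metis order_antisym)
qed

lemma part1:
  assumes Bd: "\<forall>n. cmod (a n) \<le> Bd" and nz: "\<forall>n. a n \<noteq> 0" and qn: "quasinilpotent (Tm a)"
    and hk: "hat a S k \<noteq> 0" and Q: "Q \<in> unitA_T a" and SQ: "S = mmul (mpow (Tm a) k) Q"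
  shows "gen_ideal a S = gen_ideal a (mpow (Tm a) k)"
proof -
  obtain R c where Rc: "Q = madd R (msmul c mid)" "R \<in> A_T a" using Q by (auto simp: unitA_T_def)
  obtain r where r: "R = Phi a r" "fps_nth r 0 = 0" using AT_form[OF Rc(2) nz Bd] by blast
  define s where "s = fps_X ^ k * (r + fps_const c)"
  have Sf: "S = Phi a s"
    unfolding SQ Rc(1) r(1) s_def mpow_Phi Phi_1[of a, symmetric] Phi_smul Phi_add mmul_Phi by simp
  have c0: "c \<noteq> 0"
  proof
    assume "c = 0"
    then have "fps_nth s k = 0" using r(2) by (simp add: s_def fps_X_power_mult_nth)
    then show False using hat_zero[OF Sf _ nz] hk by blast
  qed
  have Tk: "mpow (Tm a) k = Phi a (fps_X ^ k)" by (rule mpow_Phi)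
  have bTk: "bP a (fps_X ^ k)" by (rule bP_Xpow_B[OF Bd])
  have key: "S \<in> J \<longleftrightarrow> mpow (Tm a) k \<in> J" if J: "closed_ideal a J" for J
  proof
    assume SJ: "S \<in> J"
    have Z: "Phi a (s * r ^ m) \<in> J" for m
    proof (induction m)
      case 0 then show ?case using SJ Sf by simp
    next
      case (Suc m)
      have "mmul (Phi a (s * r ^ m)) (Phi a r) \<in> J" using J Suc Rc(2) r(1) by (auto simp: closed_ideal_def)
      then show ?case by (simp add: mmul_Phi ac_simps)
    qed
    have Y: "Phi a (\<Sum>m<M. fps_const (1/c * (-1/c)^m) * (s * r^m)) \<in> J" for M
    proof (induction M)
      case 0 then show ?case using J by (simp add: Phi_0 closed_ideal_def)
      case (Suc M)
      have "msmul (1/c * (-1/c)^M) (Phi a (s * r ^ M)) \<in> J" using J Z by (auto simp: closed_ideal_def)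
      then have "madd (Phi a (\<Sum>m<M. fps_const (1/c * (-1/c)^m) * (s * r^m))) (msmul (1/c * (-1/c)^M) (Phi a (s * r ^ M))) \<in> J"
        using J Suc by (auto simp: closed_ideal_def)
      then show ?case by (simp add: Phi_smul Phi_add)
    qed
    have approx: "\<exists>X\<in>J. opnorm (msub (mpow (Tm a) k) X) < \<epsilon>" if eps: "\<epsilon> > 0" for \<epsilon>
    proof -
      have dl: "cmod c / 2 > 0" using c0 by simp
      obtain K where K: "K \<ge> 0" "\<forall>M. bP a (r ^ M) \<and> nP a (r ^ M) \<le> K * (cmod c / 2) ^ M"
        using specrad[of a r, OF _ Bd qn dl] Rc(2) r(1) by blast
      define C where "C = nP a (fps_X ^ k) * K + 1"
      have "nP a (fps_X ^ k) * K \<ge> 0" using nP_nonneg[OF bTk] K(1) by simp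
      then have C: "C > 0" by (simp add: C_def)
      obtain M where M: "(1/2::real) ^ M < \<epsilon> / C" using real_arch_pow_inv[of "\<epsilon> / C" "1/2"] eps C by auto
      let ?f = "fps_const ((-1/c)^M) * (fps_X ^ k * r^M)"
      have b1: "bP a (fps_X ^ k * r^M) \<and> nP a (fps_X ^ k * r^M) \<le> nP a (fps_X ^ k) * nP a (r^M)"
        using bP_mult bTk K(2) by blast
      have b2: "bP a ?f \<and> nP a ?f \<le> cmod ((-1/c)^M) * nP a (fps_X ^ k * r^M)"
        using bP_smul b1 by blast
      have "nP a ?f \<le> cmod ((-1/c)^M) * (nP a (fps_X ^ k) * (K * (cmod c / 2) ^ M))"
      proof -
        have "nP a (fps_X ^ k) * nP a (r^M) \<le> nP a (fps_X ^ k) * (K * (cmod c / 2) ^ M)"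
          using K(2) nP_nonneg[OF bTk] by (intro mult_left_mono) auto
        then show ?thesis using b1 b2 by (smt (verit) mult_left_mono norm_ge_zero)
      qed
      also have "\<dots> = nP a (fps_X ^ k) * K * (1/2) ^ M"
        using c0 by (simp add: norm_power norm_divide power_divide field_simps)
      also have "\<dots> \<le> C * (1/2) ^ M" unfolding C_def
        by (intro mult_right_mono) auto
      also have "\<dots> < \<epsilon>" using M C by (simp add: field_simps)
      finally have lt: "nP a ?f < \<epsilon>" .
      have eq: "msub (mpow (Tm a) k) (Phi a (\<Sum>m<M. fps_const (1/c * (-1/c)^m) * (s * r^m))) = Phi a ?f"
        unfolding Tk Phi_diff using telescope[OF c0, of s "fps_X ^ k" r M] by (simp add: s_def)
      have ltt: "opnorm (msub (mpow (Tm a) k) (Phi a (\<Sum>m<M. fps_const (1/c * (-1/c)^m) * (s * r^m)))) < \<epsilon>"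
        unfolding eq using lt by (simp only: nP_def)
      show ?thesis using ltt Y[of M] by blast
    qed
    have "bounded_mat (mpow (Tm a) k)" using bTk Tk by (simp add: bP_def)
    then show "mpow (Tm a) k \<in> J" using J approx by (auto simp: closed_ideal_def)
  next
    assume TJ: "mpow (Tm a) k \<in> J"
    have "mmul (mpow (Tm a) k) R \<in> J" using J TJ Rc(2) by (auto simp: closed_ideal_def)
    moreover have "msmul c (mpow (Tm a) k) \<in> J" using J TJ by (auto simp: closed_ideal_def)
    ultimately have "madd (mmul (mpow (Tm a) k) R) (msmul c (mpow (Tm a) k)) \<in> J"
      using J by (auto simp: closed_ideal_def)
    moreover have "madd (mmul (mpow (Tm a) k) R) (msmul c (mpow (Tm a) k)) = S"
      unfolding Sf Tk r(1) mmul_Phi Phi_smul Phi_add s_def by (simp add: algebra_simps)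
    ultimately show "S \<in> J" by simp
  qed
  show ?thesis unfolding gen_ideal_def using key by (metis (mono_tags, lifting))
qed



lemma polyQ:
  assumes Bd: "\<forall>n. cmod (a n) \<le> Bd"
    and Sdef: "S = (\<lambda>p q. \<Sum>j\<in>{k..n}. h j * mpow (Tm a) j p q)" and kn: "k \<le> n"
  shows "\<exists>Q\<in>unitA_T a. S = mmul (mpow (Tm a) k) Q"
proof -
  define R0 where "R0 = (\<lambda>i j. \<Sum>l\<in>{1..n-k}. h (l+k) * mpow (Tm a) l i j)"
  have P: "R0 \<in> polys_T a" unfolding R0_def polys_T_def
    by (rule CollectI, rule exI[of _ "n-k"], rule exI[of _ "\<lambda>l. h (l+k)"]) (rule refl)
  have R0A: "R0 \<in> A_T a"
  proof -
    have "msub R0 R0 = mzero" by (simp add: msub_def mzero_def)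
    then have "\<forall>\<epsilon>>0. \<exists>P\<in>polys_T a. opnorm (msub R0 P) < \<epsilon>" using P opnorm_mzero by metis
    then show ?thesis using polys_bounded[OF Bd P] by (simp add: A_T_def)
  qed
  define Q where "Q = madd R0 (msmul (h k) mid)"
  have QU: "Q \<in> unitA_T a" unfolding Q_def unitA_T_def using R0A by blast
  have R0f: "R0 = Phi a (\<Sum>l\<in>{1..n-k}. fps_const (h (l+k)) * fps_X ^ l)"
    unfolding R0_def by (subst Phi_sum[symmetric]) (simp_all add: mpow_Phi Phi_smul[symmetric] msmul_def)
  have Sf: "S = Phi a (\<Sum>j\<in>{k..n}. fps_const (h j) * fps_X ^ j)"
    unfolding Sdef by (subst Phi_sum[symmetric]) (simp_all add: mpow_Phi Phi_smul[symmetric] msmul_def)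
  have "(\<Sum>j\<in>{k..n}. fps_const (h j) * fps_X ^ j)
        = fps_X ^ k * ((\<Sum>l\<in>{1..n-k}. fps_const (h (l+k)) * fps_X ^ l) + fps_const (h k))"
  proof -
    have "(\<Sum>j\<in>{k..n}. fps_const (h j) * fps_X ^ j) = fps_const (h k) * fps_X ^ k + (\<Sum>j\<in>{Suc k..n}. fps_const (h j) * fps_X ^ j)"
      using kn by (simp add: sum.atLeast_Suc_atMost)
    also have "(\<Sum>j\<in>{Suc k..n}. fps_const (h j) * fps_X ^ j) = (\<Sum>l\<in>{1..n-k}. fps_const (h (l+k)) * fps_X ^ (l+k))"
      using kn by (intro sum.reindex_bij_witness[of _ "\<lambda>l. l + k" "\<lambda>j. j - k"]) auto
    finally show ?thesis by (simp add: algebra_simps sum_distrib_left power_add)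
  qed
  then have "S = mmul (mpow (Tm a) k) Q"
    unfolding Sf Q_def R0f mpow_Phi Phi_1[of a, symmetric] Phi_smul Phi_add mmul_Phi by simp
  then show ?thesis using QU by blast
qed

theorem mainTheorem13:
  fixes a :: "nat \<Rightarrow> complex" and S :: mat and k :: nat
  assumes "\<exists>B. \<forall>n. cmod (a n) \<le> B"
    and "\<forall>n. a n \<noteq> 0"
    and "quasinilpotent (Tm a)"
    and "S \<in> A_T a"
    and "S \<noteq> mzero"
    and "k \<ge> 1"
    and "\<forall>j. 1 \<le> j \<and> j < k \<longrightarrow> hat a S j = 0"
    and "hat a S k \<noteq> 0"
  shows "((\<exists>Q\<in>unitA_T a. S = mmul (mpow (Tm a) k) Q)
            \<longrightarrow> gen_ideal a S = gen_ideal a (mpow (Tm a) k))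
       \<and> ((\<exists>n. S = (\<lambda>p q. \<Sum>j\<in>{k..n}. hat a S j * mpow (Tm a) j p q))
            \<longrightarrow> gen_ideal a S = gen_ideal a (mpow (Tm a) k))"
proof -
  obtain Bd where Bd: "\<forall>n. cmod (a n) \<le> Bd" using assms(1) by blast
  have P1: "gen_ideal a S = gen_ideal a (mpow (Tm a) k)" if "\<exists>Q\<in>unitA_T a. S = mmul (mpow (Tm a) k) Q"
    using that part1[OF Bd assms(2) assms(3) assms(8)] by blast
  moreover have "gen_ideal a S = gen_ideal a (mpow (Tm a) k)"
    if n: "S = (\<lambda>p q. \<Sum>j\<in>{k..n}. hat a S j * mpow (Tm a) j p q)" for n
  proof -
    have kn: "k \<le> n"
    proof (rule ccontr)
      assume "\<not> k \<le> n"
      then have "S = mzero" using n by (simp add: mzero_def)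
      then show False using assms(5) by blast
    qed
    show ?thesis using P1 polyQ[OF Bd n kn] by blast
  qed
  ultimately show ?thesis by blast
qed

end
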